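(* There exists a Stackelberg game $(G,L,F)$ that admits no SCE-PAPE, i.e. $\mathbf{X}^{SCE\text{-}PAPE}=\emptyset$.
   Context: A finite game is $G=(N,\{S_p\}_{p\in N},\{u_p\}_{p\in N})$ with players $N=\{1,\dots,n\}$, finite nonempty strategy sets $S_p$, and utilities $u_p:S\to\mathbb{R}$ on $S=\prod_{p\in N}S_p$; write $s=(s_p,s_{-p})$ with $s_{-p}\in S_{-p}=\prod_{q\neq p}S_q$. $\mathcal{X}=\Delta(S)$ is the set of probability distributions on $S$ and $u_p(x)=\sum_{s\in S}x(s)u_p(s)$ for $x\in\mathcal{X}$. For $P\subseteq N$, $\mathcal{X}^{CE}_P$ is the set of $x\in\mathcal{X}$ such that for every $p\in P$ and all $s_p\neq s_p'\in S_p$: $\sum_{s_{-p}\in S_{-p}} x(s_p,s_{-p})\,(u_p(s_p,s_{-p})-u_p(s_p',s_{-p}))\ge 0$; $\mathcal{X}^{CE}=\mathcal{X}^{CE}_N$ is the set of correlated equilibria of $G$. A Stackelberg game (SG) is a triple $(G,L,F)$ with $L\cup F=N$ and $L\cap F=\emptyset$ (leaders and followers). For $P\subseteq N$, $\Pi_P$ is the set of ordered subsets of $P$ (finite sequences of pairwise distinct elements of $P$, including the empty sequence $\varnothing$); for $\pi\in\Pi_P$ and $p\in P$ not occurring in $\pi$, $\pi p$ is $\pi$ with $p$ appended; when used as a set, $\pi$ means its set of entries. $\mathbf{X}=\prod_{\pi\in\Pi_L}\mathcal{X}^{CE}_{\pi\cup F}$, with elements $\mathbf{x}=[x_\pi]_{\pi\in\Pi_L}$.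 For $\mathbf{x}\in\mathbf{X}$ and $\pi\in\Pi_L$, $x_\pi$ is stable if $u_p(x_\pi)\ge u_p(x_{\pi p})$ for all $p\in L\setminus\pi$; $\mathbf{x}$ is stable if $x_\varnothing$ is stable, and perfectly stable if $x_\pi$ is stable for every $\pi\in\Pi_L$; $\mathbf{X}^{S}$ and $\mathbf{X}^{PS}$ denote the sets of stable and perfectly stable elements of $\mathbf{X}$. For $\mathbf{X}'\subseteq\mathbf{X}$ and $\pi\in\Pi_L$, $\mathcal{P}_{L\setminus\pi}(\mathbf{X}')$ is the set of Pareto optimal elements of $\{x'_\pi:\mathbf{x}'\in\mathbf{X}'\}$ with respect to the objectives $u_p$, $p\in L\setminus\pi$ (an element $y$ of the set is Pareto optimal if no $y'$ in the set satisfies $u_p(y')\ge u_p(y)$ for all $p\in L\setminus\pi$ with strict inequality for some such $p$). $\mathbf{x}\in\mathbf{X}$ is an SCE-PAPE if $\mathbf{x}\in\mathbf{X}^{PS}$ and $x_\pi\in\mathcal{P}_{L\setminus\pi}(\mathbf{X}^{PS})$ for every $\pi\in\Pi_L$; $\mathbf{X}^{SCE\text{-}PAPE}$ is the set of SCE-PAPEs. *)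

theory Defs
  imports Complex_Main "HOL-Library.FuncSet"
begin

type_synonym profile = "nat \<Rightarrow> nat"
type_synonym dist = "profile \<Rightarrow> real"

definition players :: "nat \<Rightarrow> nat set" where
  "players n = {1..n}"

definition finite_game :: "nat \<Rightarrow> (nat \<Rightarrow> nat set) \<Rightarrow> bool" where
  "finite_game n S \<longleftrightarrow> (\<forall>p\<in>players n. finite (S p) \<and> S p \<noteq> {})"

definition profiles :: "nat \<Rightarrow> (nat \<Rightarrow> nat set) \<Rightarrow> profile set" where
  "profiles n S = PiE (players n) S"

definition is_dist :: "nat \<Rightarrow> (nat \<Rightarrow> nat set) \<Rightarrow> dist \<Rightarrow> bool" where
  "is_dist n S x \<longleftrightarrow> (\<forall>s. 0 \<le> x s) \<and> (\<forall>s. s \<notin> profiles n S \<longrightarrow> x s = 0)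
     \<and> (\<Sum>s\<in>profiles n S. x s) = 1"

definition EU :: "nat \<Rightarrow> (nat \<Rightarrow> nat set) \<Rightarrow> (nat \<Rightarrow> profile \<Rightarrow> real) \<Rightarrow> nat \<Rightarrow> dist \<Rightarrow> real" where
  "EU n S u p x = (\<Sum>s\<in>profiles n S. x s * u p s)"

text \<open>X^CE_P: distributions satisfying the correlated-equilibrium constraints of all p in P.
The sum over s_{-p} with s_p fixed is the sum over profiles s with s p = a.\<close>
definition CE_P :: "nat \<Rightarrow> (nat \<Rightarrow> nat set) \<Rightarrow> (nat \<Rightarrow> profile \<Rightarrow> real) \<Rightarrow> nat set \<Rightarrow> dist set" where
  "CE_P n S u P = {x. is_dist n S x \<and>
     (\<forall>p\<in>P. \<forall>a\<in>S p. \<forall>b\<in>S p. a \<noteq> b \<longrightarrow>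
        0 \<le> (\<Sum>s\<in>{s\<in>profiles n S. s p = a}. x s * (u p s - u p (s(p := b)))))}"

definition stackelberg :: "nat \<Rightarrow> nat set \<Rightarrow> nat set \<Rightarrow> bool" where
  "stackelberg n L F \<longleftrightarrow> L \<union> F = players n \<and> L \<inter> F = {}"

definition ordered_subsets :: "nat set \<Rightarrow> nat list set" where
  "ordered_subsets P = {\<pi>. distinct \<pi> \<and> set \<pi> \<subseteq> P}"

definition XX :: "nat \<Rightarrow> (nat \<Rightarrow> nat set) \<Rightarrow> (nat \<Rightarrow> profile \<Rightarrow> real) \<Rightarrow> nat set \<Rightarrow> nat set
    \<Rightarrow> (nat list \<Rightarrow> dist) set" where
  "XX n S u L F = {xx. (\<forall>\<pi>\<in>ordered_subsets L. xx \<pi> \<in> CE_P n S u (set \<pi> \<union> F))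
      \<and> (\<forall>\<pi>. \<pi> \<notin> ordered_subsets L \<longrightarrow> xx \<pi> = (\<lambda>_. 0))}"

definition stable_at :: "nat \<Rightarrow> (nat \<Rightarrow> nat set) \<Rightarrow> (nat \<Rightarrow> profile \<Rightarrow> real) \<Rightarrow> nat set
    \<Rightarrow> (nat list \<Rightarrow> dist) \<Rightarrow> nat list \<Rightarrow> bool" where
  "stable_at n S u L xx \<pi> \<longleftrightarrow>
     (\<forall>p\<in>L - set \<pi>. EU n S u p (xx \<pi>) \<ge> EU n S u p (xx (\<pi> @ [p])))"

definition perfectly_stable_set :: "nat \<Rightarrow> (nat \<Rightarrow> nat set) \<Rightarrow> (nat \<Rightarrow> profile \<Rightarrow> real) \<Rightarrow> nat set
    \<Rightarrow> nat set \<Rightarrow> (nat list \<Rightarrow> dist) set" where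
  "perfectly_stable_set n S u L F =
     {xx \<in> XX n S u L F. \<forall>\<pi>\<in>ordered_subsets L. stable_at n S u L xx \<pi>}"

definition pareto_opt :: "nat \<Rightarrow> (nat \<Rightarrow> nat set) \<Rightarrow> (nat \<Rightarrow> profile \<Rightarrow> real) \<Rightarrow> nat set
    \<Rightarrow> dist set \<Rightarrow> dist set" where
  "pareto_opt n S u P Y = {y \<in> Y. \<not> (\<exists>y'\<in>Y. (\<forall>p\<in>P. EU n S u p y' \<ge> EU n S u p y)
        \<and> (\<exists>p\<in>P. EU n S u p y' > EU n S u p y))}"

definition SCE_PAPE :: "nat \<Rightarrow> (nat \<Rightarrow> nat set) \<Rightarrow> (nat \<Rightarrow> profile \<Rightarrow> real) \<Rightarrow> nat set
    \<Rightarrow> nat set \<Rightarrow> (nat list \<Rightarrow> dist) set" where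
  "SCE_PAPE n S u L F =
     {xx \<in> perfectly_stable_set n S u L F. \<forall>\<pi>\<in>ordered_subsets L.
        xx \<pi> \<in> pareto_opt n S u (L - set \<pi>) ((\<lambda>xx'. xx' \<pi>) ` perfectly_stable_set n S u L F)}"

end

theory Submission
  imports Defs
begin

definition pf :: "nat \<Rightarrow> nat \<Rightarrow> profile" where
  "pf a b = (\<lambda>i. if i = 1 then a else if i = 2 then b else undefined)"

definition SS :: "nat \<Rightarrow> nat set" where "SS = (\<lambda>_. {0,1,2})"

definition U1 :: "nat \<Rightarrow> nat \<Rightarrow> real" where
  "U1 a b = (if a=0\<and>b=0 then 3 else if a=0\<and>b=2 then -1 else if a=1\<and>b=1 then 1
     else if a=1\<and>b=2 then -1 else if a=2\<and>b=0 then 3 else if a=2\<and>b=1 then 2 else 0)"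

definition U2 :: "nat \<Rightarrow> nat \<Rightarrow> real" where
  "U2 a b = (if a=0\<and>b=0 then 2 else if a=0\<and>b=2 then 4 else if a=1\<and>b=1 then 6
     else if a=1\<and>b=2 then 6 else if a=2\<and>b=2 then 1 else 0)"

definition uu :: "nat \<Rightarrow> profile \<Rightarrow> real" where
  "uu p s = (if p = 1 then U1 (s 1) (s 2) else if p = 2 then U2 (s 1) (s 2) else 0)"

lemma pf_1[simp]: "pf a b 1 = a" and pf_2[simp]: "pf a b 2 = b"
  by (simp_all add: pf_def)

lemma pf_eq[simp]: "pf a b = pf c d \<longleftrightarrow> a = c \<and> b = d"
  by (metis pf_1 pf_2)

lemma players2: "players 2 = {1,2}"
  by (auto simp: players_def)

lemma profiles_eq: "profiles 2 SS = (\<lambda>(a,b). pf a b) ` ({0,1,2} \<times> {0,1,2})"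
proof
  show "profiles 2 SS \<subseteq> (\<lambda>(a,b). pf a b) ` ({0,1,2} \<times> {0,1,2})"
  proof
    fix s assume s: "s \<in> profiles 2 SS"
    hence "s 1 \<in> {0,1,2}" "s 2 \<in> {0,1,2}" "\<And>i. i \<notin> {1,2} \<Longrightarrow> s i = undefined"
      by (auto simp: profiles_def players2 SS_def PiE_iff extensional_def)
    moreover have "s = pf (s 1) (s 2)"
      using calculation(3) by (auto simp: pf_def fun_eq_iff)
    ultimately show "s \<in> (\<lambda>(a,b). pf a b) ` ({0,1,2} \<times> {0,1,2})"
      by (metis (no_types, lifting) SigmaI image_eqI case_prod_conv)
  qed
next
  show "(\<lambda>(a,b). pf a b) ` ({0,1,2} \<times> {0,1,2}) \<subseteq> profiles 2 SS"
    by (auto simp: profiles_def players2 SS_def PiE_iff extensional_def pf_def)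
qed

lemma fin_prof[simp]: "finite (profiles 2 SS)"
  by (simp add: profiles_eq)

lemma sum_prof: "(\<Sum>s\<in>profiles 2 SS. g s) =
   g (pf 0 0) + g (pf 0 1) + g (pf 0 2) + g (pf 1 0) + g (pf 1 1) + g (pf 1 2)
   + g (pf 2 0) + g (pf 2 1) + g (pf 2 2)"
proof -
  have inj: "inj_on (\<lambda>(a,b). pf a b) ({0,1,2} \<times> {0,1,2})"
    by (auto simp: inj_on_def)
  have "(\<Sum>s\<in>profiles 2 SS. g s) = (\<Sum>(a,b)\<in>{0,1,2::nat} \<times> {0,1,2::nat}. g (pf a b))"
    unfolding profiles_eq by (subst sum.reindex[OF inj]) (simp add: case_prod_unfold)
  also have "\<dots> = (\<Sum>a\<in>{0,1,2::nat}. \<Sum>b\<in>{0,1,2::nat}. g (pf a b))"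
    by (rule sum.cartesian_product[symmetric])
  finally show ?thesis by (simp add: algebra_simps)
qed

lemma pf_in[simp]: "a \<in> {0,1,2} \<Longrightarrow> b \<in> {0,1,2} \<Longrightarrow> pf a b \<in> profiles 2 SS"
  by (auto simp: profiles_eq)

lemma uu1[simp]: "uu 1 s = U1 (s 1) (s 2)" and uu2[simp]: "uu 2 s = U2 (s 1) (s 2)"
  by (simp_all add: uu_def)

lemma U1_tab: "U1 0 0 = 3" "U1 0 1 = 0" "U1 0 2 = -1" "U1 1 0 = 0" "U1 1 1 = 1" "U1 1 2 = -1"
  "U1 2 0 = 3" "U1 2 1 = 2" "U1 2 2 = 0"
  by (simp_all add: U1_def)

lemma U2_tab: "U2 0 0 = 2" "U2 0 1 = 0" "U2 0 2 = 4" "U2 1 0 = 0" "U2 1 1 = 6" "U2 1 2 = 6"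
  "U2 2 0 = 0" "U2 2 1 = 0" "U2 2 2 = 1"
  by (simp_all add: U2_def)

lemma pf_S[simp]: "pf a b (Suc 0) = a" by (simp add: pf_def)

lemma U1_tabS[simp]: "U1 0 0 = 3" "U1 0 (Suc 0) = 0" "U1 0 2 = -1" "U1 (Suc 0) 0 = 0" "U1 (Suc 0) (Suc 0) = 1" "U1 (Suc 0) 2 = -1"
  "U1 2 0 = 3" "U1 2 (Suc 0) = 2" "U1 2 2 = 0"
  by (simp_all add: U1_def)

lemma U2_tabS[simp]: "U2 0 0 = 2" "U2 0 (Suc 0) = 0" "U2 0 2 = 4" "U2 (Suc 0) 0 = 0" "U2 (Suc 0) (Suc 0) = 6" "U2 (Suc 0) 2 = 6"
  "U2 2 0 = 0" "U2 2 (Suc 0) = 0" "U2 2 2 = 1"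
  by (simp_all add: U2_def)

lemma pf_upd1: "(pf a b)(1 := c) = pf c b" and pf_upd2: "(pf a b)(2 := c) = pf a c"
  by (auto simp: pf_def fun_eq_iff)

lemma pf_upd1S[simp]: "(pf a b)(Suc 0 := c) = pf c b" and pf_upd2S[simp]: "(pf a b)(2 := c) = pf a c"
  by (auto simp: pf_def fun_eq_iff)

lemma uu1S[simp]: "uu (Suc 0) s = U1 (s (Suc 0)) (s 2)"
  by (simp add: uu_def)

lemma EU1: "EU 2 SS uu 1 x = 3*x(pf 0 0) - x(pf 0 2) + x(pf 1 1) - x(pf 1 2) + 3*x(pf 2 0) + 2*x(pf 2 1)"
  unfolding EU_def sum_prof uu1 pf_1 pf_2 U1_tab by simp

lemma EU2: "EU 2 SS uu 2 x = 2*x(pf 0 0) + 4*x(pf 0 2) + 6*x(pf 1 1) + 6*x(pf 1 2) + x(pf 2 2)"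
  unfolding EU_def sum_prof uu2 pf_1 pf_2 U2_tab by simp

lemma dist_facts:
  assumes "is_dist 2 SS x"
  shows "x(pf 0 0) \<ge> 0" "x(pf 0 1) \<ge> 0" "x(pf 0 2) \<ge> 0" "x(pf 1 0) \<ge> 0" "x(pf 1 1) \<ge> 0"
    "x(pf 1 2) \<ge> 0" "x(pf 2 0) \<ge> 0" "x(pf 2 1) \<ge> 0" "x(pf 2 2) \<ge> 0"
    "x(pf 0 0) + x(pf 0 1) + x(pf 0 2) + x(pf 1 0) + x(pf 1 1) + x(pf 1 2)
   + x(pf 2 0) + x(pf 2 1) + x(pf 2 2) = 1"
  using assms unfolding is_dist_def sum_prof by auto

lemma filt_sum: "(\<Sum>s\<in>{s\<in>profiles 2 SS. s p = a}. g s) = (\<Sum>s\<in>profiles 2 SS. if s p = a then g s else 0)"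
  by (rule sum.inter_filter) simp

lemma CE_inst:
  assumes "x \<in> CE_P 2 SS uu P" "p \<in> P" "a \<in> {0,1,2}" "b \<in> {0,1,2}" "a \<noteq> b"
  shows "0 \<le> (\<Sum>s\<in>profiles 2 SS. if s p = a then x s * (uu p s - uu p (s(p := b))) else 0)"
proof -
  have "\<forall>p\<in>P. \<forall>a\<in>SS p. \<forall>b\<in>SS p. a \<noteq> b \<longrightarrow>
        0 \<le> (\<Sum>s\<in>{s\<in>profiles 2 SS. s p = a}. x s * (uu p s - uu p (s(p := b))))"
    using assms(1) unfolding CE_P_def by blast
  hence "0 \<le> (\<Sum>s\<in>{s\<in>profiles 2 SS. s p = a}. x s * (uu p s - uu p (s(p := b))))"
    using assms(2-5) unfolding SS_def by blast
  thus ?thesis unfolding filt_sum .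
qed

lemma CE1:
  assumes "x \<in> CE_P 2 SS uu P" "1 \<in> P"
  shows "-2*x(pf 0 1) - x(pf 0 2) \<ge> 0" "-3*x(pf 1 0) - x(pf 1 1) - x(pf 1 2) \<ge> 0"
proof -
  have "0 \<le> (\<Sum>s\<in>profiles 2 SS. if s 1 = 0 then x s * (uu 1 s - uu 1 (s(1 := 2))) else 0)"
    by (rule CE_inst[OF assms]) auto
  thus "-2*x(pf 0 1) - x(pf 0 2) \<ge> 0"
    unfolding sum_prof pf_upd1 uu1 pf_1 pf_2 U1_tab by simp
  have "0 \<le> (\<Sum>s\<in>profiles 2 SS. if s 1 = 1 then x s * (uu 1 s - uu 1 (s(1 := 2))) else 0)"
    by (rule CE_inst[OF assms]) auto
  thus "-3*x(pf 1 0) - x(pf 1 1) - x(pf 1 2) \<ge> 0"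
    unfolding sum_prof pf_upd1 uu1 pf_1 pf_2 U1_tab by simp
qed

lemma CE2:
  assumes "x \<in> CE_P 2 SS uu P" "2 \<in> P"
  shows "-2*x(pf 0 0) - 6*x(pf 1 0) - x(pf 2 0) \<ge> 0" "-4*x(pf 0 1) - x(pf 2 1) \<ge> 0"
proof -
  have "0 \<le> (\<Sum>s\<in>profiles 2 SS. if s 2 = 0 then x s * (uu 2 s - uu 2 (s(2 := 2))) else 0)"
    by (rule CE_inst[OF assms]) auto
  thus "-2*x(pf 0 0) - 6*x(pf 1 0) - x(pf 2 0) \<ge> 0"
    unfolding sum_prof pf_upd2 uu2 pf_1 pf_2 U2_tab by simp
  have "0 \<le> (\<Sum>s\<in>profiles 2 SS. if s 2 = 1 then x s * (uu 2 s - uu 2 (s(2 := 2))) else 0)"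
    by (rule CE_inst[OF assms]) auto
  thus "-4*x(pf 0 1) - x(pf 2 1) \<ge> 0"
    unfolding sum_prof pf_upd2 uu2 pf_1 pf_2 U2_tab by simp
qed

definition dl :: "profile \<Rightarrow> dist" where "dl t = (\<lambda>s. if s = t then 1 else 0)"

lemma dl_mult: "dl t s * c = (if s = t then c else 0)"
  by (simp add: dl_def)

lemma dl_dist: "t \<in> profiles 2 SS \<Longrightarrow> is_dist 2 SS (dl t)"
proof -
  assume t: "t \<in> profiles 2 SS"
  have "(\<Sum>s\<in>profiles 2 SS. dl t s) = (\<Sum>s\<in>profiles 2 SS. if s = t then 1 else 0)"
    by (simp add: dl_def)
  also have "\<dots> = 1" using t by simp
  finally show ?thesis unfolding is_dist_def using t by (auto simp: dl_def)
qed

lemma dl_EU: "t \<in> profiles 2 SS \<Longrightarrow> EU 2 SS uu p (dl t) = uu p t"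
  unfolding EU_def dl_mult by simp

lemma dl_CE:
  assumes t: "t \<in> profiles 2 SS"
    and h: "\<And>p b. p \<in> P \<Longrightarrow> b \<in> {0,1,2} \<Longrightarrow> b \<noteq> t p \<Longrightarrow> uu p (t(p:=b)) \<le> uu p t"
  shows "dl t \<in> CE_P 2 SS uu P"
proof -
  have "0 \<le> (\<Sum>s\<in>{s\<in>profiles 2 SS. s p = a}. dl t s * (uu p s - uu p (s(p := b))))"
    if "p \<in> P" "a \<in> SS p" "b \<in> SS p" "a \<noteq> b" for p a b
  proof -
    have "(\<Sum>s\<in>profiles 2 SS. if s p = a then (if s = t then uu p s - uu p (s(p := b)) else 0) else 0)
        = (\<Sum>s\<in>profiles 2 SS. if s = t then (if t p = a then uu p t - uu p (t(p := b)) else 0) else 0)"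
      by (rule sum.cong) auto
    also have "\<dots> = (if t p = a then uu p t - uu p (t(p := b)) else 0)" using t by simp
    finally have e: "(\<Sum>s\<in>{s\<in>profiles 2 SS. s p = a}. dl t s * (uu p s - uu p (s(p := b))))
       = (if t p = a then uu p t - uu p (t(p := b)) else 0)"
      unfolding filt_sum dl_mult .
    show ?thesis unfolding e using h[of p b] that by (auto simp: SS_def)
  qed
  thus ?thesis unfolding CE_P_def using dl_dist[OF t] by blast
qed

lemma CE_mono: "P \<subseteq> P' \<Longrightarrow> x \<in> CE_P n S u P' \<Longrightarrow> x \<in> CE_P n S u P"
  unfolding CE_P_def by blast

lemma uuP: "uu 1 (pf 1 0) \<le> uu 1 (pf 0 0)" "uu 1 (pf 2 0) \<le> uu 1 (pf 0 0)"
  unfolding uu1 pf_1 pf_2 U1_tab by simp_all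

lemma uuQ: "uu 2 (pf 1 0) \<le> uu 2 (pf 1 1)" "uu 2 (pf 1 2) \<le> uu 2 (pf 1 1)"
  unfolding uu2 pf_1 pf_2 U2_tab by simp_all

lemma uuE: "uu 1 (pf 0 2) \<le> uu 1 (pf 2 2)" "uu 1 (pf 1 2) \<le> uu 1 (pf 2 2)"
   "uu 2 (pf 2 0) \<le> uu 2 (pf 2 2)" "uu 2 (pf 2 1) \<le> uu 2 (pf 2 2)"
  unfolding uu1 uu2 pf_1 pf_2 U1_tab U2_tab by simp_all

lemma dlP: "dl (pf 0 0) \<in> CE_P 2 SS uu {1}"
proof (rule dl_CE)
  fix p b assume "p \<in> {1::nat}" "b \<in> {0,1,2::nat}" "b \<noteq> pf 0 0 p"
  hence "p = 1" "b = 1 \<or> b = 2" by auto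
  thus "uu p ((pf 0 0)(p:=b)) \<le> uu p (pf 0 0)" by auto
qed simp

lemma dlQ: "dl (pf 1 1) \<in> CE_P 2 SS uu {2}"
proof (rule dl_CE)
  fix p b assume "p \<in> {2::nat}" "b \<in> {0,1,2::nat}" "b \<noteq> pf 1 1 p"
  hence "p = 2" "b = 0 \<or> b = 2" by auto
  thus "uu p ((pf 1 1)(p:=b)) \<le> uu p (pf 1 1)" by auto
qed simp

lemma dlE: "dl (pf 2 2) \<in> CE_P 2 SS uu {1,2}"
proof (rule dl_CE)
  fix p b assume "p \<in> {1,2::nat}" "b \<in> {0,1,2::nat}" "b \<noteq> pf 2 2 p"
  hence "(p = 1 \<and> (b = 0 \<or> b = 1)) \<or> (p = 2 \<and> (b = 0 \<or> b = 1))" by auto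
  thus "uu p ((pf 2 2)(p:=b)) \<le> uu p (pf 2 2)" by auto
qed simp

definition W :: "nat \<Rightarrow> profile \<Rightarrow> nat list \<Rightarrow> dist" where
  "W i t \<pi> = (if \<pi> \<in> ordered_subsets {1,2} then (if \<pi> = [] \<or> \<pi> = [i] then dl t else dl (pf 2 2))
     else (\<lambda>_. 0))"

lemma W_PS:
  assumes i: "i \<in> {1,2}" and t: "t \<in> profiles 2 SS" and ct: "dl t \<in> CE_P 2 SS uu {i}"
    and h: "\<And>j. j \<in> {1,2} \<Longrightarrow> j \<noteq> i \<Longrightarrow> EU 2 SS uu j (dl (pf 2 2)) \<le> EU 2 SS uu j (dl t)"
  shows "W i t \<in> perfectly_stable_set 2 SS uu {1,2} {}"
proof -
  have XX: "W i t \<in> XX 2 SS uu {1,2} {}"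
    unfolding XX_def
  proof (intro CollectI conjI allI impI ballI)
    fix \<pi> assume \<pi>: "\<pi> \<in> ordered_subsets {1,2}"
    hence sp: "set \<pi> \<union> {} \<subseteq> {1,2}" by (auto simp: ordered_subsets_def)
    show "W i t \<pi> \<in> CE_P 2 SS uu (set \<pi> \<union> {})"
    proof (cases "\<pi> = [] \<or> \<pi> = [i]")
      case True
      hence "set \<pi> \<union> {} \<subseteq> {i}" by auto
      thus ?thesis using True \<pi> CE_mono[OF _ ct] by (simp add: W_def)
    next
      case False
      thus ?thesis using \<pi> CE_mono[OF sp dlE] by (simp add: W_def)
    qed
  next
    fix \<pi> :: "nat list" assume "\<pi> \<notin> ordered_subsets {1,2}"
    thus "W i t \<pi> = (\<lambda>_. 0)" by (simp add: W_def)
  qed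
  have st: "stable_at 2 SS uu {1,2} (W i t) \<pi>" if \<pi>: "\<pi> \<in> ordered_subsets {1,2}" for \<pi>
    unfolding stable_at_def
  proof
    fix p assume p: "p \<in> {1,2} - set \<pi>"
    have \<pi>p: "\<pi> @ [p] \<in> ordered_subsets {1,2}" using \<pi> p by (auto simp: ordered_subsets_def)
    show "EU 2 SS uu p (W i t (\<pi> @ [p])) \<le> EU 2 SS uu p (W i t \<pi>)"
    proof (cases "\<pi> = []")
      case True
      show ?thesis
      proof (cases "p = i")
        case True
        thus ?thesis using \<open>\<pi> = []\<close> \<pi> \<pi>p by (simp add: W_def)
      next
        case False
        hence "W i t (\<pi> @ [p]) = dl (pf 2 2)" "W i t \<pi> = dl t" using \<open>\<pi> = []\<close> \<pi> \<pi>p by (auto simp: W_def)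
        thus ?thesis using h[of p] p False by simp
      qed
    next
      case False
      hence ne: "\<pi> @ [p] \<noteq> []" "\<pi> @ [p] \<noteq> [i]" by auto
      hence w2: "W i t (\<pi> @ [p]) = dl (pf 2 2)" using \<pi>p ne by (auto simp: W_def)
      show ?thesis
      proof (cases "\<pi> = [i]")
        case True
        hence "W i t \<pi> = dl t" "p \<noteq> i" using \<pi> p by (auto simp: W_def)
        thus ?thesis using w2 h[of p] p by simp
      next
        case False
        hence "W i t \<pi> = dl (pf 2 2)" using \<pi> \<open>\<pi> \<noteq> []\<close> by (simp add: W_def)
        thus ?thesis using w2 by simp
      qed
    qed
  qed
  show ?thesis unfolding perfectly_stable_set_def using XX st by blast
qed

lemma EUdl: "EU 2 SS uu 1 (dl (pf 0 0)) = 3" "EU 2 SS uu 2 (dl (pf 0 0)) = 2"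
  "EU 2 SS uu 1 (dl (pf 1 1)) = 1" "EU 2 SS uu 2 (dl (pf 1 1)) = 6"
  "EU 2 SS uu 1 (dl (pf 2 2)) = 0" "EU 2 SS uu 2 (dl (pf 2 2)) = 1"
  by (simp_all add: dl_EU)

lemma W1: "W 1 (pf 0 0) \<in> perfectly_stable_set 2 SS uu {1,2} {}"
  apply (rule W_PS) using dlP EUdl by auto

lemma W2: "W 2 (pf 1 1) \<in> perfectly_stable_set 2 SS uu {1,2} {}"
  apply (rule W_PS) using dlQ EUdl by auto

lemma no_pape: "SCE_PAPE 2 SS uu {1,2} {} = {}"
proof (rule equals0I)
  fix xx assume xx: "xx \<in> SCE_PAPE 2 SS uu {1,2} {}"
  have PS: "xx \<in> perfectly_stable_set 2 SS uu {1,2} {}" using xx unfolding SCE_PAPE_def by blast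
  have par: "\<And>\<pi>. \<pi> \<in> ordered_subsets {1,2} \<Longrightarrow>
     xx \<pi> \<in> pareto_opt 2 SS uu ({1,2} - set \<pi>) ((\<lambda>xx'. xx' \<pi>) ` perfectly_stable_set 2 SS uu {1,2} {})"
    using xx unfolding SCE_PAPE_def by blast
  have XXm: "\<And>\<pi>. \<pi> \<in> ordered_subsets {1,2} \<Longrightarrow> xx \<pi> \<in> CE_P 2 SS uu (set \<pi> \<union> {})"
    using PS unfolding perfectly_stable_set_def XX_def by blast
  have stab: "stable_at 2 SS uu {1,2} xx []"
    using PS unfolding perfectly_stable_set_def by (auto simp: ordered_subsets_def)
  have o0: "[] \<in> ordered_subsets {1,2::nat}" and o1: "[1] \<in> ordered_subsets {1,2::nat}"
    and o2: "[2] \<in> ordered_subsets {1,2::nat}" by (auto simp: ordered_subsets_def)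
  define x0 where "x0 = xx []"
  define x1 where "x1 = xx [1]"
  define x2 where "x2 = xx [2]"
  have c0: "x0 \<in> CE_P 2 SS uu {}" using XXm[OF o0] unfolding x0_def by simp
  have c1: "x1 \<in> CE_P 2 SS uu {1}" using XXm[OF o1] unfolding x1_def by simp
  have c2: "x2 \<in> CE_P 2 SS uu {2}" using XXm[OF o2] unfolding x2_def by simp
  have s1: "EU 2 SS uu 1 x1 \<le> EU 2 SS uu 1 x0" using stab unfolding stable_at_def x0_def x1_def by auto
  have s2: "EU 2 SS uu 2 x2 \<le> EU 2 SS uu 2 x0" using stab unfolding stable_at_def x0_def x2_def by auto
  have p1: "2 \<le> EU 2 SS uu 2 x1"
  proof (rule ccontr)
    assume a: "\<not> 2 \<le> EU 2 SS uu 2 x1"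
    have "x1 \<in> pareto_opt 2 SS uu ({1,2} - set [1]) ((\<lambda>xx'. xx' [1]) ` perfectly_stable_set 2 SS uu {1,2} {})"
      using par[OF o1] unfolding x1_def .
    moreover have "W 1 (pf 0 0) [1] \<in> (\<lambda>xx'. xx' [1]) ` perfectly_stable_set 2 SS uu {1,2} {}"
      using W1 by blast
    moreover have "W 1 (pf 0 0) [1] = dl (pf 0 0)" using o1 by (simp add: W_def)
    moreover have "{1,2} - set [1] = {2::nat}" by auto
    ultimately show False using a EUdl(2) unfolding pareto_opt_def by force
  qed
  have p2: "1 \<le> EU 2 SS uu 1 x2"
  proof (rule ccontr)
    assume a: "\<not> 1 \<le> EU 2 SS uu 1 x2"
    have "x2 \<in> pareto_opt 2 SS uu ({1,2} - set [2]) ((\<lambda>xx'. xx' [2]) ` perfectly_stable_set 2 SS uu {1,2} {})"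
      using par[OF o2] unfolding x2_def .
    moreover have "W 2 (pf 1 1) [2] \<in> (\<lambda>xx'. xx' [2]) ` perfectly_stable_set 2 SS uu {1,2} {}"
      using W2 by blast
    moreover have "W 2 (pf 1 1) [2] = dl (pf 1 1)" using o2 by (simp add: W_def)
    moreover have "{1,2} - set [2] = {1::nat}" by auto
    ultimately show False using a EUdl(3) unfolding pareto_opt_def by force
  qed
  have d0: "is_dist 2 SS x0" and d1: "is_dist 2 SS x1" and d2: "is_dist 2 SS x2"
    using c0 c1 c2 unfolding CE_P_def by auto
  have a1: "EU 2 SS uu 1 x1 \<ge> 3"
    using p1 CE1[OF c1] dist_facts[OF d1] unfolding EU1 EU2 by (simp; linarith)
  have a2: "EU 2 SS uu 2 x2 \<ge> 6"
    using p2 CE2[OF c2] dist_facts[OF d2] unfolding EU1 EU2 by (simp; linarith)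
  have "2 * EU 2 SS uu 1 x0 + EU 2 SS uu 2 x0 \<le> 8"
    using dist_facts[OF d0] unfolding EU1 EU2 by (simp; linarith)
  thus False using a1 a2 s1 s2 by linarith
qed

theorem proposition1:
  shows "\<exists>(n::nat) (S::nat \<Rightarrow> nat set) (u::nat \<Rightarrow> profile \<Rightarrow> real) L F.
           finite_game n S \<and> stackelberg n L F \<and> SCE_PAPE n S u L F = {}"
proof (intro exI conjI)
  show "finite_game 2 SS" by (simp add: finite_game_def SS_def)
  show "stackelberg 2 {1,2} {}" by (simp add: stackelberg_def players2)
  show "SCE_PAPE 2 SS uu {1,2} {} = {}" by (rule no_pape)
qed

end
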